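(* Let $\mathcal{X}$ be a non-empty set, $\mathcal{B}\subseteq\mathcal{P}(\mathcal{X})\setminus\{\emptyset\}$ and $g\in\mathcal{G}_{\geq0}(\mathcal{X})$. If, for every non-negative rational $r$, the set $\{x\in\mathcal{X}\colon g(x)\geq r\}$ is a finite union of pairwise disjoint events in $\mathcal{B}\cup\{\mathcal{X},\emptyset\}$, then $g$ is $\mathcal{B}$-measurable.
   Context: $\mathcal{G}_{\geq0}(\mathcal{X})$ is the set of bounded non-negative real functions on $\mathcal{X}$; $\mathbb{I}_B$ is the indicator of $B$. A function $g\in\mathcal{G}_{\geq0}(\mathcal{X})$ is simple $\mathcal{B}$-measurable if there are $c_0\geq0$, $n\in\mathbb{N}\cup\{0\}$ and, for $k=1,\dots,n$, $c_k\geq0$ and $B_k\in\mathcal{B}$ with $g=c_0+\sum_{k=1}^nc_k\mathbb{I}_{B_k}$. A function $g\in\mathcal{G}_{\geq0}(\mathcal{X})$ is $\mathcal{B}$-measurable if there is a sequence $(g_n)_{n\in\mathbb{N}}$ of simple $\mathcal{B}$-measurable functions in $\mathcal{G}_{\geq0}(\mathcal{X})$ with $\lim_{n\to\infty}\sup_{x}|g(x)-g_n(x)|=0$. *)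

theory Defs
  imports "HOL-Analysis.Analysis"
begin

text \<open>Functions on the possibility space X are modelled as functions on the ambient type,
  considered only on X.\<close>

definition G_nonneg :: "'a set \<Rightarrow> ('a \<Rightarrow> real) \<Rightarrow> bool" where
  "G_nonneg X g \<longleftrightarrow> (\<forall>x\<in>X. 0 \<le> g x) \<and> (\<exists>M. \<forall>x\<in>X. g x \<le> M)"

definition simple_B_measurable :: "'a set \<Rightarrow> 'a set set \<Rightarrow> ('a \<Rightarrow> real) \<Rightarrow> bool" where
  "simple_B_measurable X \<B> g \<longleftrightarrow>
     (\<exists>c0 (n::nat) (c::nat \<Rightarrow> real) (Bs::nat \<Rightarrow> 'a set).
        0 \<le> c0 \<and> (\<forall>k\<in>{1..n}. 0 \<le> c k \<and> Bs k \<in> \<B>) \<and>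
        (\<forall>x\<in>X. g x = c0 + (\<Sum>k=1..n. c k * indicator (Bs k) x)))"

definition B_measurable :: "'a set \<Rightarrow> 'a set set \<Rightarrow> ('a \<Rightarrow> real) \<Rightarrow> bool" where
  "B_measurable X \<B> g \<longleftrightarrow> G_nonneg X g \<and>
     (\<exists>gs::nat \<Rightarrow> 'a \<Rightarrow> real.
        (\<forall>n. G_nonneg X (gs n) \<and> simple_B_measurable X \<B> (gs n)) \<and>
        (\<lambda>n. SUP x\<in>X. \<bar>g x - gs n x\<bar>) \<longlonglongrightarrow> 0)"

end

theory Submission
  imports Defs
begin

definition slist :: "'a set \<Rightarrow> 'a set set \<Rightarrow> ('a \<Rightarrow> real) \<Rightarrow> bool" where
  "slist X \<B> g \<longleftrightarrow> (\<exists>c0 ps. 0 \<le> c0 \<and> (\<forall>p\<in>set ps. 0 \<le> fst p \<and> snd p \<in> \<B>) \<and>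
     (\<forall>x\<in>X. g x = c0 + (\<Sum>p\<leftarrow>ps. fst p * indicator (snd p) x)))"

lemma slist_simple:
  assumes "slist X \<B> g" shows "simple_B_measurable X \<B> g"
proof -
  obtain c0 ps where c0: "0 \<le> c0" and ps: "\<forall>p\<in>set ps. 0 \<le> fst p \<and> snd p \<in> \<B>"
    and eq: "\<forall>x\<in>X. g x = c0 + (\<Sum>p\<leftarrow>ps. fst p * indicator (snd p) x)"
    using assms unfolding slist_def by blast
  define c where "c k = fst (ps ! (k - 1))" for k
  define Bs where "Bs k = snd (ps ! (k - 1))" for k
  have "\<forall>k\<in>{1..length ps}. 0 \<le> c k \<and> Bs k \<in> \<B>"
    using ps by (auto simp: c_def Bs_def)
  moreover have "\<forall>x\<in>X. g x = c0 + (\<Sum>k=1..length ps. c k * indicator (Bs k) x)"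
  proof
    fix x assume "x \<in> X"
    have "(\<Sum>p\<leftarrow>ps. fst p * indicator (snd p) x)
        = (\<Sum>i=0..<length ps. fst (ps ! i) * indicator (snd (ps ! i)) x)"
      by (simp add: sum_list_sum_nth)
    also have "\<dots> = (\<Sum>k=1..length ps. c k * indicator (Bs k) x)"
    proof -
      have eqset: "{1..length ps} = Suc ` {0..<length ps}" by (auto simp: image_iff) 
      show ?thesis unfolding eqset by (subst sum.reindex) (auto simp: c_def Bs_def)
    qed
    finally show "g x = c0 + (\<Sum>k=1..length ps. c k * indicator (Bs k) x)"
      using eq \<open>x \<in> X\<close> by simp
  qed
  ultimately show ?thesis unfolding simple_B_measurable_def using c0 by blast
qed

lemma slist_add:
  assumes "slist X \<B> f" "slist X \<B> g" shows "slist X \<B> (\<lambda>x. f x + g x)"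
proof -
  obtain c0 ps where "0 \<le> c0" "\<forall>p\<in>set ps. 0 \<le> fst p \<and> snd p \<in> \<B>"
    "\<forall>x\<in>X. f x = c0 + (\<Sum>p\<leftarrow>ps. fst p * indicator (snd p) x)"
    using assms(1) unfolding slist_def by blast
  moreover obtain d0 qs where "0 \<le> d0" "\<forall>p\<in>set qs. 0 \<le> fst p \<and> snd p \<in> \<B>"
    "\<forall>x\<in>X. g x = d0 + (\<Sum>p\<leftarrow>qs. fst p * indicator (snd p) x)"
    using assms(2) unfolding slist_def by blast
  ultimately show ?thesis unfolding slist_def
    by (intro exI[of _ "c0 + d0"] exI[of _ "ps @ qs"]) auto
qed

lemma slist_scale:
  assumes "slist X \<B> f" "0 \<le> a" shows "slist X \<B> (\<lambda>x. a * f x)"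
proof -
  obtain c0 ps where "0 \<le> c0" "\<forall>p\<in>set ps. 0 \<le> fst p \<and> snd p \<in> \<B>"
    "\<forall>x\<in>X. f x = c0 + (\<Sum>p\<leftarrow>ps. fst p * indicator (snd p) x)"
    using assms(1) unfolding slist_def by blast
  with assms(2) show ?thesis unfolding slist_def
    by (intro exI[of _ "a * c0"] exI[of _ "map (\<lambda>p. (a * fst p, snd p)) ps"])
      (auto simp: sum_list_const_mult[symmetric] o_def mult.assoc distrib_left)
qed

lemma slist_zero: "slist X \<B> (\<lambda>x. 0)"
  unfolding slist_def by (intro exI[of _ 0] exI[of _ "[]"]) auto

lemma slist_sum:
  assumes "\<And>k. slist X \<B> (f k)" shows "slist X \<B> (\<lambda>x. \<Sum>k=1..(N::nat). f k x)"
proof (induction N)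
  case 0 then show ?case using slist_zero by simp
next
  case (Suc N)
  have "slist X \<B> (\<lambda>x. (\<Sum>k=1..N. f k x) + f (Suc N) x)"
    by (rule slist_add[OF Suc assms])
  then show ?case by (simp add: add.commute)
qed

lemma slist_level:
  assumes "\<exists>\<D>. finite \<D> \<and> \<D> \<subseteq> \<B> \<union> {X, {}} \<and> disjoint \<D> \<and> \<Union>\<D> = L"
    and "L \<subseteq> X"
  shows "slist X \<B> (indicator L)"
proof -
  obtain \<D> where D: "finite \<D>" "\<D> \<subseteq> \<B> \<union> {X, {}}" "disjoint \<D>" "\<Union>\<D> = L"
    using assms(1) by blast
  show ?thesis
  proof (cases "X \<in> \<D>")
    case True
    then have "L = X" using D assms(2) by auto
    then show ?thesis unfolding slist_def
      by (intro exI[of _ 1] exI[of _ "[]"]) auto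
  next
    case False
    define D' where "D' = \<D> - {{}}"
    have D'B: "D' \<subseteq> \<B>" using D False by (auto simp: D'_def)
    have "finite D'" using D by (simp add: D'_def)
    then obtain l where l: "set l = D'" "distinct l" using finite_distinct_list by blast
    have disj: "disjoint_family_on id D'"
      using D(3) unfolding D'_def disjoint_family_on_def pairwise_def disjnt_def by auto
    have UL: "\<Union>D' = L" using D(4) by (auto simp: D'_def)
    show ?thesis unfolding slist_def
    proof (intro exI[of _ 0] exI[of _ "map (\<lambda>B. (1::real, B)) l"] conjI ballI)
      fix x
      have "(\<Sum>p\<leftarrow>map (\<lambda>B. (1::real, B)) l. fst p * indicator (snd p) x)
          = (\<Sum>B\<leftarrow>l. indicator B x)" by (simp add: o_def)
      also have "\<dots> = (\<Sum>B\<in>D'. indicator B x)"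
        using l by (simp add: sum_list_distinct_conv_sum_set)
      also have "\<dots> = indicator (\<Union>(id ` D')) x"
        by (rule indicator_UN_disjoint[OF \<open>finite D'\<close> disj, symmetric, simplified id_apply])
      finally show "indicator L x = 0 + (\<Sum>p\<leftarrow>map (\<lambda>B. (1::real, B)) l. fst p * indicator (snd p) x)"
        using UL by simp
    qed (use l D'B in auto)
  qed
qed

theorem proposition4:
  fixes X :: "'a set" and \<B> :: "'a set set" and g :: "'a \<Rightarrow> real"
  assumes "X \<noteq> {}"
    and "\<B> \<subseteq> Pow X - {{}}"
    and "G_nonneg X g"
    and "\<forall>r\<in>\<rat>. 0 \<le> r \<longrightarrow>
           (\<exists>\<D>. finite \<D> \<and> \<D> \<subseteq> \<B> \<union> {X, {}} \<and> disjoint \<D> \<and>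
                 \<Union>\<D> = {x\<in>X. g x \<ge> r})"
  shows "B_measurable X \<B> g"
proof -
  obtain M where M: "\<forall>x\<in>X. 0 \<le> g x" "\<forall>x\<in>X. g x \<le> M"
    using assms(3) unfolding G_nonneg_def by blast
  define L where "L r = {x\<in>X. g x \<ge> r}" for r
  define m where "m n = real (Suc n)" for n
  define N where "N n = nat \<lceil>M * m n\<rceil>" for n
  define gs where "gs n x = (1 / m n) * (\<Sum>k=1..N n. indicator (L (real k / m n)) x)" for n x
  have mpos: "m n > 0" for n by (simp add: m_def)
  have key: "gs n x = real (nat \<lfloor>m n * g x\<rfloor>) / m n" if x: "x \<in> X" for n x
  proof -
    let ?t = "m n * g x"
    have t0: "0 \<le> ?t" using M x mpos[of n] by simp
    have ind: "indicator (L (real k / m n)) x = (if real k \<le> ?t then 1 else (0::real))" for k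
      using x mpos[of n] by (auto simp: L_def divide_le_eq mult.commute)
    have le: "nat \<lfloor>?t\<rfloor> \<le> N n"
    proof -
      have "?t \<le> M * m n" using M x mpos[of n] by (simp add: mult.commute)
      then have "\<lfloor>?t\<rfloor> \<le> \<lceil>M * m n\<rceil>"
        by (meson ceiling_correct floor_le_ceiling floor_mono order_trans le_floor_iff)
      then show ?thesis unfolding N_def by linarith
    qed
    have set: "{k\<in>{1..N n}. real k \<le> ?t} = {1..nat \<lfloor>?t\<rfloor>}"
      using le t0 by (auto simp: le_nat_iff le_floor_iff) (meson le_nat_floor order_trans)
    have "(\<Sum>k=1..N n. indicator (L (real k / m n)) x) = (\<Sum>k\<in>{1..N n}. if real k \<le> ?t then 1 else (0::real))"
      by (simp add: ind)
    also have "\<dots> = real (card {k\<in>{1..N n}. real k \<le> ?t})"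
      by (simp add: sum.If_cases Int_def conj_commute)
    also have "\<dots> = real (nat \<lfloor>?t\<rfloor>)" by (simp only: set card_atLeastAtMost)
    finally show ?thesis by (simp add: gs_def)
  qed
  have err: "\<bar>g x - gs n x\<bar> \<le> 1 / m n" if x: "x \<in> X" for n x
  proof -
    let ?t = "m n * g x"
    have t0: "0 \<le> ?t" using M x mpos[of n] by simp
    have gs: "gs n x = of_int \<lfloor>?t\<rfloor> / m n" using key[OF x, of n] t0 by simp
    have a: "of_int \<lfloor>?t\<rfloor> \<le> ?t" "?t - of_int \<lfloor>?t\<rfloor> \<le> 1" by linarith+
    have d: "g x - gs n x = (?t - of_int \<lfloor>?t\<rfloor>) / m n"
      using mpos[of n] by (simp add: gs diff_divide_distrib)
    have "0 \<le> g x - gs n x" unfolding d using a mpos[of n] by simp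
    moreover have "g x - gs n x \<le> 1 / m n" unfolding d
      using a mpos[of n] by (intro divide_right_mono) auto
    ultimately have "0 \<le> g x - gs n x" "g x - gs n x \<le> 1 / m n" by auto
    then show ?thesis by simp
  qed
  have Gn: "G_nonneg X (gs n)" for n
  proof -
    have "\<forall>x\<in>X. 0 \<le> gs n x" using key mpos by (simp add: less_imp_le)
    moreover have "\<forall>x\<in>X. gs n x \<le> M + 1"
    proof
      fix x assume x: "x \<in> X"
      have "gs n x \<le> g x + 1 / m n" using err[OF x, of n] by linarith
      moreover have "1 / m n \<le> 1" using mpos[of n] by (simp add: m_def)
      ultimately show "gs n x \<le> M + 1" using M x by fastforce
    qed
    ultimately show ?thesis unfolding G_nonneg_def by blast
  qed
  have Sn: "simple_B_measurable X \<B> (gs n)" for n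
  proof -
    have "slist X \<B> (indicator (L (real k / m n)))" for k
    proof (rule slist_level)
      have "real k / m n \<in> \<rat>" by (simp add: m_def Rats_divide)
      moreover have "0 \<le> real k / m n" using mpos[of n] by simp
      ultimately show "\<exists>\<D>. finite \<D> \<and> \<D> \<subseteq> \<B> \<union> {X, {}} \<and> disjoint \<D> \<and> \<Union>\<D> = L (real k / m n)"
        using assms(4) unfolding L_def by blast
    qed (auto simp: L_def)
    then have "slist X \<B> (\<lambda>x. \<Sum>k=1..N n. indicator (L (real k / m n)) x)"
      by (rule slist_sum)
    then have "slist X \<B> (\<lambda>x. (1 / m n) * (\<Sum>k=1..N n. indicator (L (real k / m n)) x))"
      by (rule slist_scale) (use mpos[of n] in simp)
    then show ?thesis by (intro slist_simple) (simp add: gs_def[abs_def])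
  qed
  have sup_le: "(SUP x\<in>X. \<bar>g x - gs n x\<bar>) \<le> 1 / m n" for n
    using err assms(1) by (intro cSUP_least) auto
  have sup_ge: "0 \<le> (SUP x\<in>X. \<bar>g x - gs n x\<bar>)" for n
  proof -
    obtain x0 where "x0 \<in> X" using assms(1) by blast
    moreover have "bdd_above ((\<lambda>x. \<bar>g x - gs n x\<bar>) ` X)"
      using err by (intro bdd_aboveI[of _ "1 / m n"]) auto
    ultimately show ?thesis by (meson abs_ge_zero cSUP_upper2)
  qed
  have lim: "(\<lambda>n. 1 / m n) \<longlonglongrightarrow> 0"
    using LIMSEQ_inverse_real_of_nat by (simp add: m_def inverse_eq_divide)
  have "(\<lambda>n. SUP x\<in>X. \<bar>g x - gs n x\<bar>) \<longlonglongrightarrow> 0"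
    by (rule tendsto_sandwich[OF _ _ tendsto_const lim]) (use sup_le sup_ge in auto)
  then show ?thesis unfolding B_measurable_def using assms(3) Gn Sn by blast
qed

end
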